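(* Let $n\in\mathbb{N}$ and let $\boldsymbol{V}$ be a finite E-subspace of $\boldsymbol{Y}_n$. For every weak $n$-coloring on $\boldsymbol{V}$ there is a finite sequence $\boldsymbol{V}_0,\dots,\boldsymbol{V}_k$ of Esakia spaces such that: (i) $\boldsymbol{V}_0=\boldsymbol{V}$ and each $\boldsymbol{V}_{i+1}$ is obtained by applying a $\beta$-reduction $f_i\colon \boldsymbol{V}_i\to\boldsymbol{V}_{i+1}$ to $\boldsymbol{V}_i$; (ii) the kernel $\mathrm{Ker}(f_{k-1}\circ\cdots\circ f_0)$ does not identify any pair of elements of $\boldsymbol{V}$ of distinct color; (iii) for every $m\in\mathbb{N}$ such that $y_{m,0},\dots,y_{m,2^{n+1}-1}\in V$, there are $i<j$ such that $\langle y_{m,i},y_{m,j}\rangle\in\mathrm{Ker}(f_{k-1}\circ\cdots\circ f_0)$.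
   Context: $\mathbb{N}=\{0,1,2,\dots\}$. For $n\in\mathbb{N}$ let $P_n=\{y_{m,i}: m,i\in\mathbb{N},\ i\le 2^{n+1}-1\}$ (pairwise distinct elements) and define $y_{m,i}\prec y_{m-1,j}$ whenever $m\ge1$ and $i\ne j$ (and no other relations). $\boldsymbol{Y}_n$ is the root compactification of $P_n$ ordered by the reflexive transitive closure of $\prec$: a new least element $\bot$ is added and $U$ is declared open iff $\bot\notin U$ or $U$ is cofinite; it is an Esakia space. An E-subspace of an Esakia space is a closed upset with induced topology and order; finite ones are finite posets with the discrete topology. $\{0,1\}^n$ is ordered componentwise ($\{0,1\}^0$ has a single element). A weak $n$-coloring of a finite poset $\boldsymbol{V}$ is an order-preserving map $\boldsymbol{V}\to\{0,1\}^n$; the value at $x$ is the color of $x$. If $x\ne y$ are elements of a finite poset $\boldsymbol{W}$ with exactly the same immediate successors (an immediate successor of $x$ is a $z>x$ with nothing strictly between), the $\beta$-reduction identifying $x$ and $y$ is the quotient map from $\boldsymbol{W}$ to $\boldsymbol{W}/R$, where $R$ is the smallest equivalence relation identifying $x$ and $y$, and $\boldsymbol{W}/R$ is ordered by $u/R\sqsubseteq v/R$ iff $u'\le v'$ for some $u'\in u/R$, $v'\in v/R$. $\mathrm{Ker}(g)=\{\langle u,v\rangle: g(u)=g(v)\}$; for $k=0$ the composition is the identity. *)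

theory Defs
  imports Main
begin

(* Elements of Y_n: the new least element Bot and y_{m,i} = Y m i *)
datatype yelt = Bot | Y nat nat

definition bnd :: "nat \<Rightarrow> nat" where
  "bnd n = 2 ^ (n + 1) - 1"

definition P :: "nat \<Rightarrow> yelt set" where
  "P n = {Y m i | m i. i \<le> bnd n}"

definition Ycar :: "nat \<Rightarrow> yelt set" where
  "Ycar n = insert Bot (P n)"

definition prec :: "nat \<Rightarrow> yelt \<Rightarrow> yelt \<Rightarrow> bool" where
  "prec n a b \<longleftrightarrow> (\<exists>m i j. m \<ge> 1 \<and> i \<le> bnd n \<and> j \<le> bnd n \<and> i \<noteq> j
        \<and> a = Y m i \<and> b = Y (m - 1) j)"

definition leY :: "nat \<Rightarrow> yelt \<Rightarrow> yelt \<Rightarrow> bool" where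
  "leY n a b \<longleftrightarrow> (a = Bot \<and> b \<in> Ycar n) \<or> (a \<in> P n \<and> b \<in> P n \<and> (prec n)\<^sup>*\<^sup>* a b)"

(* topology of the root compactification *)
definition openY :: "nat \<Rightarrow> yelt set \<Rightarrow> bool" where
  "openY n U \<longleftrightarrow> U \<subseteq> Ycar n \<and> (Bot \<notin> U \<or> finite (Ycar n - U))"

definition closedY :: "nat \<Rightarrow> yelt set \<Rightarrow> bool" where
  "closedY n C \<longleftrightarrow> C \<subseteq> Ycar n \<and> openY n (Ycar n - C)"

definition E_subspace :: "nat \<Rightarrow> yelt set \<Rightarrow> bool" where
  "E_subspace n V \<longleftrightarrow> closedY n V \<and> (\<forall>x\<in>V. \<forall>y\<in>Ycar n. leY n x y \<longrightarrow> y \<in> V)"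

(* {0,1}^n as bool lists of length n, ordered componentwise *)
definition weak_coloring :: "nat \<Rightarrow> yelt set \<Rightarrow> (yelt \<Rightarrow> bool list) \<Rightarrow> bool" where
  "weak_coloring n V c \<longleftrightarrow> (\<forall>v\<in>V. length (c v) = n) \<and>
     (\<forall>u\<in>V. \<forall>v\<in>V. leY n u v \<longrightarrow> list_all2 (\<le>) (c u) (c v))"

(* finite posets whose elements are blocks (sets) of elements of V; a poset is a carrier
   together with its order *)
type_synonym 'a fposet = "'a set set \<times> ('a set \<Rightarrow> 'a set \<Rightarrow> bool)"

definition imm_succ :: "'a fposet \<Rightarrow> 'a set \<Rightarrow> 'a set \<Rightarrow> bool" where
  "imm_succ W x z \<longleftrightarrow> z \<in> fst W \<and> snd W x z \<and> x \<noteq> z \<and>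
     \<not> (\<exists>w\<in>fst W. snd W x w \<and> snd W w z \<and> w \<noteq> x \<and> w \<noteq> z)"

(* The quotient W/R is represented by replacing each R-class by the union of its
   members (a bijective renaming of the classes); the class {x,y} becomes x \<union> y. *)
definition beta_step :: "'a fposet \<Rightarrow> 'a fposet \<Rightarrow> ('a set \<Rightarrow> 'a set) \<Rightarrow> bool" where
  "beta_step W W' f \<longleftrightarrow> (\<exists>x\<in>fst W. \<exists>y\<in>fst W. x \<noteq> y \<and>
      (\<forall>z. imm_succ W x z \<longleftrightarrow> imm_succ W y z) \<and>
      f = (\<lambda>B. if B = x \<or> B = y then x \<union> y else B) \<and>
      fst W' = f ` fst W \<and>
      snd W' = (\<lambda>P Q. \<exists>u\<in>fst W. \<exists>v\<in>fst W. f u = P \<and> f v = Q \<and> snd W u v))"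

definition initial :: "nat \<Rightarrow> yelt set \<Rightarrow> yelt fposet" where
  "initial n V = ((\<lambda>v. {v}) ` V, (\<lambda>A B. \<exists>a\<in>A. \<exists>b\<in>B. leY n a b))"

(* f_{k-1} \<circ> ... \<circ> f_0 for fs = [f_0, ..., f_{k-1}]; identity when k = 0 *)
definition compose_all :: "('a \<Rightarrow> 'a) list \<Rightarrow> 'a \<Rightarrow> 'a" where
  "compose_all fs = fold (\<lambda>f g. f \<circ> g) fs id"

end

theory Submission
  imports Defs
begin

fun lev :: "yelt \<Rightarrow> nat" where "lev Bot = 0" | "lev (Y m i) = m"

lemma bnd_ge1: "1 \<le> bnd n"
proof -
  have "(1::nat) \<le> 2 ^ n" by simp
  moreover have "bnd n = 2*2^n - 1" unfolding bnd_def by simp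
  ultimately show ?thesis by linarith
qed

lemma bnd_card: "card {i. i \<le> bnd n} = 2 * 2 ^ n"
proof -
  have "(1::nat) \<le> 2 ^ (n+1)" by simp
  thus ?thesis unfolding bnd_def by simp
qed

lemma P_Y[simp]: "Y m i \<in> P n \<longleftrightarrow> i \<le> bnd n" by (auto simp: P_def)
lemma P_Bot[simp]: "Bot \<notin> P n" by (auto simp: P_def)

lemma prec_D: "prec n a b \<Longrightarrow> \<exists>m i j. a = Y (Suc m) i \<and> b = Y m j \<and> i \<le> bnd n \<and> j \<le> bnd n \<and> i \<noteq> j"
  unfolding prec_def by (metis Suc_diff_1 less_eq_Suc_le One_nat_def)

lemma path_lev: "(prec n)\<^sup>*\<^sup>* a b \<Longrightarrow> a = Y m i \<Longrightarrow>
   \<exists>m' j. b = Y m' j \<and> m' \<le> m \<and> (m' = m \<longrightarrow> b = a)"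
proof (induction rule: rtranclp_induct)
  case base then show ?case by auto
next
  case (step b d)
  then obtain m' j where b: "b = Y m' j" "m' \<le> m" "m' = m \<longrightarrow> b = a" by auto
  from prec_D[OF step(2)] obtain m'' i'' j'' where "b = Y (Suc m'') i''" "d = Y m'' j''" by auto
  with b show ?case by auto
qed

lemma leY_Y: "leY n (Y m i) b \<longleftrightarrow> i \<le> bnd n \<and> b \<in> P n \<and> (prec n)\<^sup>*\<^sup>* (Y m i) b"
  by (auto simp: leY_def)

lemma leY_lev: "leY n (Y m i) (Y m' j) \<Longrightarrow> m' \<le> m \<and> (m' = m \<longrightarrow> j = i)"
  using path_lev[of n "Y m i" "Y m' j" m i] by (auto simp: leY_Y)

lemma leY_adj: "leY n (Y (Suc m) i) (Y m j) \<longleftrightarrow> i \<le> bnd n \<and> j \<le> bnd n \<and> i \<noteq> j"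
proof
  assume h: "leY n (Y (Suc m) i) (Y m j)"
  hence p: "(prec n)\<^sup>*\<^sup>* (Y (Suc m) i) (Y m j)" and ij: "i \<le> bnd n" "j \<le> bnd n" by (auto simp: leY_Y)
  from p show "i \<le> bnd n \<and> j \<le> bnd n \<and> i \<noteq> j"
  proof (cases rule: converse_rtranclpE)
    case base then show ?thesis by simp
  next
    case (step z)
    from prec_D[OF step(1)] obtain j' where z: "z = Y m j'" "i \<noteq> j'" by auto
    from path_lev[OF step(2) z(1)] z have "j = j'" by auto
    with z ij show ?thesis by auto
  qed
next
  assume "i \<le> bnd n \<and> j \<le> bnd n \<and> i \<noteq> j"
  hence "prec n (Y (Suc m) i) (Y m j)" unfolding prec_def by force
  thus "leY n (Y (Suc m) i) (Y m j)" using \<open>i \<le> bnd n \<and> j \<le> bnd n \<and> i \<noteq> j\<close> by (auto simp: leY_Y)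
qed

lemma leY_mid: "leY n (Y m i) (Y m' j) \<Longrightarrow> Suc m' < m \<Longrightarrow>
   \<exists>k. leY n (Y m i) (Y (m - 1) k) \<and> leY n (Y (m - 1) k) (Y m' j)"
proof -
  assume h: "leY n (Y m i) (Y m' j)" and lt: "Suc m' < m"
  hence p: "(prec n)\<^sup>*\<^sup>* (Y m i) (Y m' j)" and ij: "i \<le> bnd n" "j \<le> bnd n" by (auto simp: leY_Y)
  from p show ?thesis
  proof (cases rule: converse_rtranclpE)
    case base then show ?thesis using lt by simp
  next
    case (step z)
    from prec_D[OF step(1)] obtain m0 i0 j0 where z: "Y m i = Y (Suc m0) i0" "z = Y m0 j0" "i0 \<le> bnd n" "j0 \<le> bnd n" by auto
    hence "m0 = m - 1" by auto
    with z step ij show ?thesis by (auto simp: leY_Y)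
  qed
qed

lemma halve:
  assumes "finite K" "K' \<subseteq> K" "\<forall>l\<in>K'. b < length l \<and> \<not> l ! b \<and> l[b := True] \<in> K"
  shows "2 * card K' \<le> card K"
proof -
  let ?g = "\<lambda>(l::bool list). l[b := True]"
  have fK': "finite K'" using assms finite_subset by blast
  have inj: "inj_on ?g K'"
  proof (rule inj_onI)
    fix x y assume "x \<in> K'" "y \<in> K'" "x[b := True] = y[b := True]"
    hence "(x[b := True])[b := False] = (y[b := True])[b := False]" by simp
    moreover have "(x[b := True])[b := False] = x" using \<open>x \<in> K'\<close> assms(3) by (metis list_update_id list_update_overwrite)
    moreover have "(y[b := True])[b := False] = y" using \<open>y \<in> K'\<close> assms(3) by (metis list_update_id list_update_overwrite)
    ultimately show "x = y" by simp
  qed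
  have disj: "K' \<inter> ?g ` K' = {}" using assms(3) by auto
  have sub: "K' \<union> ?g ` K' \<subseteq> K" using assms(2,3) by auto
  have "card (K' \<union> ?g ` K') = card K' + card K'"
    using card_Un_disjoint[OF fK' finite_imageI[OF fK'] disj] card_image[OF inj] by simp
  moreover have "card (K' \<union> ?g ` K') \<le> card K" using card_mono[OF assms(1) sub] .
  ultimately show ?thesis by simp
qed

locale setting =
  fixes n :: nat and V :: "yelt set" and c :: "yelt \<Rightarrow> bool list"
  assumes E: "E_subspace n V" and finV: "finite V" and wc: "weak_coloring n V c"
begin

lemma V_Ycar: "V \<subseteq> Ycar n" using E unfolding E_subspace_def closedY_def by auto

lemma Bot_notin: "Bot \<notin> V"
proof
  assume b: "Bot \<in> V"
  have upE: "\<forall>x\<in>V. \<forall>y\<in>Ycar n. leY n x y \<longrightarrow> y \<in> V" using E unfolding E_subspace_def by blast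
  have "\<forall>y\<in>Ycar n. leY n Bot y" unfolding leY_def by blast
  hence "\<forall>y\<in>Ycar n. y \<in> V" using upE b by blast
  hence "range (\<lambda>m. Y m 0) \<subseteq> V" by (auto simp: Ycar_def)
  moreover have "infinite (range (\<lambda>m. Y m 0))"
  proof
    assume "finite (range (\<lambda>m. Y m 0))"
    hence "finite (UNIV::nat set)" by (rule finite_imageD) (auto simp: inj_on_def)
    thus False by simp
  qed
  ultimately show False using finV finite_subset by blast
qed

lemma V_Y: "u \<in> V \<Longrightarrow> \<exists>m i. u = Y m i \<and> i \<le> bnd n"
  using V_Ycar Bot_notin by (cases u) (auto simp: Ycar_def)

lemma up: "u \<in> V \<Longrightarrow> leY n u w \<Longrightarrow> w \<in> V"
proof -
  assume u: "u \<in> V" and l: "leY n u w"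
  have upE: "\<forall>x\<in>V. \<forall>y\<in>Ycar n. leY n x y \<longrightarrow> y \<in> V" using E unfolding E_subspace_def by blast
  have "u \<noteq> Bot" using u Bot_notin by blast
  hence "w \<in> P n" using l unfolding leY_def by blast
  hence "w \<in> Ycar n" unfolding Ycar_def by blast
  thus ?thesis using upE u l by blast
qed

lemma colmono: "u \<in> V \<Longrightarrow> v \<in> V \<Longrightarrow> leY n u v \<Longrightarrow> list_all2 (\<le>) (c u) (c v)"
  using wc unfolding weak_coloring_def by auto

lemma collen: "u \<in> V \<Longrightarrow> length (c u) = n"
  using wc unfolding weak_coloring_def by auto

definition full :: "nat \<Rightarrow> bool" where "full m \<longleftrightarrow> (\<forall>i \<le> bnd n. Y m i \<in> V)"

lemma full_Suc: "full (Suc m) \<Longrightarrow> full m"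
  unfolding full_def
proof (intro allI impI)
  fix j assume f: "\<forall>i\<le>bnd n. Y (Suc m) i \<in> V" and j: "j \<le> bnd n"
  define i where "i = (if j = 0 then 1 else 0::nat)"
  have "i \<le> bnd n" "i \<noteq> j" using bnd_ge1[of n] by (auto simp: i_def)
  hence "leY n (Y (Suc m) i) (Y m j)" using j by (simp add: leY_adj)
  thus "Y m j \<in> V" using up f \<open>i \<le> bnd n\<close> by blast
qed

lemma full_le: "full m \<Longrightarrow> m' \<le> m \<Longrightarrow> full m'"
  by (induction m) (auto simp: le_Suc_eq dest: full_Suc)

primrec blk :: "nat \<Rightarrow> nat set" where
  "blk 0 = {}"
| "blk (Suc m) = blk m \<union> {i. i \<le> bnd n \<and> i \<notin> blk m \<and>
      \<not> (\<exists>j. j \<le> bnd n \<and> j \<notin> blk m \<and> j \<noteq> i \<and> c (Y m j) = c (Y m i))}"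

definition Kb :: "nat \<Rightarrow> bool list set" where
  "Kb m = {l. length l = n \<and> (\<forall>k \<le> bnd n. 0 < m \<longrightarrow> list_all2 (\<le>) l (c (Y (m - 1) k)))}"

lemma blk_sub: "blk m \<subseteq> {i. i \<le> bnd n}"
  by (induction m) auto

lemma Kb_fin: "finite (Kb m)"
  by (rule finite_subset[OF _ finite_lists_length_eq[of "UNIV::bool set" n]]) (auto simp: Kb_def)

lemma Kb0: "card (Kb 0) = 2 ^ n"
proof -
  have "Kb 0 = {xs. set xs \<subseteq> (UNIV::bool set) \<and> length xs = n}" by (auto simp: Kb_def)
  thus ?thesis using card_lists_length_eq[of "UNIV::bool set" n] by simp
qed

lemma le_trans_l: "list_all2 (\<le>) (a::bool list) b \<Longrightarrow> list_all2 (\<le>) b d \<Longrightarrow> list_all2 (\<le>) a d"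
  by (auto simp: list_all2_conv_all_nth)

lemma Kb_down: "list_all2 (\<le>) l k \<Longrightarrow> k \<in> Kb m \<Longrightarrow> l \<in> Kb m"
  unfolding Kb_def using le_trans_l list_all2_lengthD by fastforce

lemma Kb_ne: "full m \<Longrightarrow> replicate n False \<in> Kb m"
proof -
  assume f: "full m"
  have "full (m - 1)" using full_le[OF f] by simp
  thus ?thesis unfolding Kb_def by (auto simp: list_all2_conv_all_nth collen full_def)
qed

lemma Kb_pos: "full m \<Longrightarrow> 1 \<le> card (Kb m)"
  using Kb_ne Kb_fin by (metis One_nat_def Suc_leI card_gt_0_iff empty_iff)

lemma col_Kb: "full m \<Longrightarrow> i \<le> bnd n \<Longrightarrow> i \<notin> blk m \<Longrightarrow> c (Y m i) \<in> Kb m"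
proof (cases m)
  case 0
  assume "full m" "i \<le> bnd n"
  then show ?thesis using 0 collen by (auto simp: Kb_def full_def)
next
  case (Suc m')
  assume f: "full m" and i: "i \<le> bnd n" and nb: "i \<notin> blk m"
  have f': "full m'" using f Suc full_Suc by simp
  from nb Suc obtain j where j: "j \<le> bnd n" "j \<notin> blk m'" "j \<noteq> i" "c (Y m' j) = c (Y m' i)"
    using i by auto
  have hk: "list_all2 (\<le>) (c (Y m i)) (c (Y m' k))" if k: "k \<le> bnd n" for k
  proof (cases "k = i")
    case True
    have "leY n (Y m i) (Y m' j)" using Suc i j by (simp add: leY_adj)
    hence "list_all2 (\<le>) (c (Y m i)) (c (Y m' j))" using colmono f f' i j unfolding full_def by blast
    then show ?thesis using j True by simp
  next
    case False
    have "leY n (Y m i) (Y m' k)" using Suc i k False by (simp add: leY_adj)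
    then show ?thesis using colmono f f' i k unfolding full_def by blast
  qed
  have "Y m i \<in> V" using f i unfolding full_def by blast
  hence "length (c (Y m i)) = n" by (rule collen)
  then show ?thesis unfolding Kb_def using hk Suc by simp
qed

lemma inv_step:
  assumes IH: "card (blk m) + 2 * card (Kb m) \<le> 2 * 2 ^ n" and f: "full m"
  shows "card (blk (Suc m)) + 2 * card (Kb (Suc m)) \<le> 2 * 2 ^ n"
    and "\<exists>i j. i \<le> bnd n \<and> j \<le> bnd n \<and> i \<noteq> j \<and> i \<notin> blk m \<and> j \<notin> blk m \<and> c (Y m i) = c (Y m j)"
proof -
  define A where "A = {i. i \<le> bnd n \<and> i \<notin> blk m}"
  define col where "col i = c (Y m i)" for i
  define U where "U = {i\<in>A. \<not> (\<exists>j\<in>A. j \<noteq> i \<and> col j = col i)}"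
  have finA: "finite A" unfolding A_def by auto
  have blkS: "blk (Suc m) = blk m \<union> U" unfolding U_def A_def col_def by auto
  have disj: "blk m \<inter> U = {}" unfolding U_def A_def by auto
  have finU: "finite U" using finA unfolding U_def by auto
  have cardS: "card (blk (Suc m)) = card (blk m) + card U"
    unfolding blkS by (rule card_Un_disjoint[OF finite_subset[OF blk_sub] finU disj]) simp
  have cardA: "card A = 2 * 2 ^ n - card (blk m)"
  proof -
    have "A = {i. i \<le> bnd n} - blk m" unfolding A_def by auto
    thus ?thesis using card_Diff_subset[OF finite_subset[OF blk_sub] blk_sub] bnd_card by simp
  qed
  have colA: "col ` A \<subseteq> Kb m" using col_Kb f unfolding A_def col_def by auto
  have "\<not> inj_on col A"
  proof
    assume "inj_on col A"
    hence "card A \<le> card (Kb m)" using card_image card_mono[OF Kb_fin colA] by metis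
    thus False using cardA IH Kb_pos[OF f] by linarith
  qed
  then obtain i0 j0 where ij: "i0 \<in> A" "j0 \<in> A" "i0 \<noteq> j0" "col i0 = col j0"
    unfolding inj_on_def by blast
  show "\<exists>i j. i \<le> bnd n \<and> j \<le> bnd n \<and> i \<noteq> j \<and> i \<notin> blk m \<and> j \<notin> blk m \<and> c (Y m i) = c (Y m j)"
    using ij unfolding A_def col_def by blast
  have i0K: "col i0 \<in> Kb m" using colA ij by auto
  have Udiff: "u \<in> U \<Longrightarrow> col u \<noteq> col i0" for u
    using ij unfolding U_def by (cases "u = i0") auto
  have injU: "inj_on col U" unfolding U_def inj_on_def by blast
  have "col ` U \<subseteq> Kb m - {col i0}" using colA Udiff unfolding U_def by auto
  hence "card (col ` U) \<le> card (Kb m - {col i0})" by (rule card_mono[OF finite_Diff[OF Kb_fin]])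
  moreover have "card (Kb m - {col i0}) = card (Kb m) - 1" using i0K Kb_fin by simp
  moreover have "card (col ` U) = card U" using injU by (rule card_image)
  ultimately have "card U \<le> card (Kb m) - 1" by simp
  show "card (blk (Suc m)) + 2 * card (Kb (Suc m)) \<le> 2 * 2 ^ n"
  proof (cases "U = {}")
    case True
    have "Kb (Suc m) \<subseteq> Kb m"
    proof
      fix l assume "l \<in> Kb (Suc m)"
      hence "list_all2 (\<le>) l (col i0)" using ij unfolding Kb_def A_def col_def by auto
      thus "l \<in> Kb m" using Kb_down i0K by blast
    qed
    hence "card (Kb (Suc m)) \<le> card (Kb m)" using card_mono Kb_fin by blast
    then show ?thesis using cardS True IH by simp
  next
    case False
    then obtain u where u: "u \<in> U" by auto
    have uA: "u \<in> A" using u unfolding U_def by auto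
    have uK: "col u \<in> Kb m" using colA uA by auto
    have ne: "col u \<noteq> col i0" using Udiff u by auto
    have lu: "length (col u) = n" "length (col i0) = n" using uK i0K by (auto simp: Kb_def)
    have "\<exists>b<n. col u ! b \<noteq> col i0 ! b"
    proof (rule ccontr)
      assume "\<not> (\<exists>b<n. col u ! b \<noteq> col i0 ! b)"
      hence "col u = col i0" using lu by (intro nth_equalityI) auto
      thus False using ne by simp
    qed
    then obtain b where b: "b < n" "col u ! b \<noteq> col i0 ! b" by blast
    have "\<exists>p q. p \<in> col ` A \<and> q \<in> col ` A \<and> \<not> p ! b \<and> q ! b"
    proof (cases "col u ! b")
      case True
      then show ?thesis using b uA ij(1) by (intro exI[of _ "col i0"] exI[of _ "col u"]) auto
    next
      case False
      then show ?thesis using b uA ij(1) by (intro exI[of _ "col u"] exI[of _ "col i0"]) auto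
    qed
    then obtain p q where pq: "p \<in> col ` A" "q \<in> col ` A" "\<not> p ! b" "q ! b" by blast
    have pK: "p \<in> Kb m" and qK: "q \<in> Kb m" using pq colA by auto
    have "2 * card (Kb (Suc m)) \<le> card (Kb m)"
    proof (rule halve[OF Kb_fin])
      have lp: "list_all2 (\<le>) l p" if "l \<in> Kb (Suc m)" for l
        using that pq(1) unfolding Kb_def A_def col_def by auto
      show "Kb (Suc m) \<subseteq> Kb m" using lp Kb_down pK by blast
      show "\<forall>l\<in>Kb (Suc m). b < length l \<and> \<not> l ! b \<and> l[b := True] \<in> Kb m"
      proof
        fix l assume l: "l \<in> Kb (Suc m)"
        have len: "length l = n" using l by (auto simp: Kb_def)
        have "list_all2 (\<le>) l p" using lp l .
        hence nb: "\<not> l ! b" using pq(3) b(1) len by (auto simp: list_all2_conv_all_nth)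
        have lK: "l \<in> Kb m" using lp l Kb_down pK by blast
        have "l[b := True] \<in> Kb m"
          unfolding Kb_def
        proof (intro CollectI conjI allI impI)
          show "length (l[b := True]) = n" using len by simp
          fix k assume k: "k \<le> bnd n" "0 < m"
          have A1: "list_all2 (\<le>) l (c (Y (m - 1) k))" using lK k by (auto simp: Kb_def)
          have A2: "list_all2 (\<le>) q (c (Y (m - 1) k))" using qK k by (auto simp: Kb_def)
          have hb: "c (Y (m - 1) k) ! b" using A2 pq(4) b(1) qK by (auto simp: list_all2_conv_all_nth Kb_def)
          have A1': "length l = length (c (Y (m - 1) k))" "\<And>i. i < length l \<Longrightarrow> l ! i \<le> c (Y (m - 1) k) ! i"
            using A1 by (auto simp: list_all2_conv_all_nth)
          show "list_all2 (\<le>) (l[b := True]) (c (Y (m - 1) k))"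
            unfolding list_all2_conv_all_nth
          proof (intro conjI allI impI)
            show "length (l[b := True]) = length (c (Y (m - 1) k))" using A1' by simp
            fix i assume i: "i < length (l[b := True])"
            show "l[b := True] ! i \<le> c (Y (m - 1) k) ! i"
            proof (cases "i = b")
              case True then show ?thesis using hb i by simp
            next
              case False then show ?thesis using A1'(2) i by simp
            qed
          qed
        qed
        thus "b < length l \<and> \<not> l ! b \<and> l[b := True] \<in> Kb m" using len b nb by simp
      qed
    qed
    then show ?thesis using cardS IH \<open>card U \<le> card (Kb m) - 1\<close> Kb_pos[OF f] by linarith
  qed
qed

lemma inv_all: "full m \<Longrightarrow> card (blk m) + 2 * card (Kb m) \<le> 2 * 2 ^ n"
proof (induction m)
  case 0 then show ?case using Kb0 by simp
next
  case (Suc m)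
  then show ?case using inv_step(1) full_Suc by blast
qed

lemma nonsing: "full m \<Longrightarrow> \<exists>i j. i \<le> bnd n \<and> j \<le> bnd n \<and> i \<noteq> j \<and> i \<notin> blk m \<and> j \<notin> blk m \<and> c (Y m i) = c (Y m j)"
  using inv_step(2) inv_all by blast

end

inductive reach :: "yelt fposet \<Rightarrow> yelt fposet list \<Rightarrow> (yelt set \<Rightarrow> yelt set) list \<Rightarrow> bool" for W0 where
  r0: "reach W0 [W0] []"
| rs: "reach W0 Vs fs \<Longrightarrow> beta_step (last Vs) W f \<Longrightarrow> reach W0 (Vs @ [W]) (fs @ [f])"

lemma reach_props: "reach W0 Vs fs \<Longrightarrow> length Vs = length fs + 1 \<and> Vs ! 0 = W0 \<and>
   (\<forall>i<length fs. beta_step (Vs ! i) (Vs ! (i + 1)) (fs ! i))"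
proof (induction rule: reach.induct)
  case r0 then show ?case by simp
next
  case (rs Vs fs W f)
  have ne: "Vs \<noteq> []" using rs.IH by auto
  have "\<forall>i<length (fs @ [f]). beta_step ((Vs @ [W]) ! i) ((Vs @ [W]) ! (i + 1)) ((fs @ [f]) ! i)"
  proof (intro allI impI)
    fix i assume i: "i < length (fs @ [f])"
    show "beta_step ((Vs @ [W]) ! i) ((Vs @ [W]) ! (i + 1)) ((fs @ [f]) ! i)"
    proof (cases "i < length fs")
      case True
      then show ?thesis using rs.IH by (simp add: nth_append)
    next
      case False
      hence "i = length fs" using i by simp
      moreover have "last Vs = Vs ! length fs" using ne rs.IH by (simp add: last_conv_nth)
      ultimately show ?thesis using rs.hyps(2) rs.IH by (simp add: nth_append)
    qed
  qed
  then show ?case using rs.IH ne by (simp add: nth_append)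
qed

lemma compose_snoc: "compose_all (fs @ [f]) = f \<circ> compose_all fs"
  unfolding compose_all_def by simp

context setting
begin

definition Erel :: "yelt \<Rightarrow> yelt \<Rightarrow> bool" where
  "Erel u v \<longleftrightarrow> u = v \<or> (\<exists>m i j. u = Y m i \<and> v = Y m j \<and> full m \<and> i \<le> bnd n \<and> j \<le> bnd n
      \<and> i \<notin> blk m \<and> j \<notin> blk m \<and> c u = c v)"

definition tb :: "yelt \<Rightarrow> yelt set" where "tb u = {v \<in> V. Erel u v}"

lemma Erel_sym: "Erel u v \<Longrightarrow> Erel v u" unfolding Erel_def by auto
lemma Erel_trans: "Erel u v \<Longrightarrow> Erel v w \<Longrightarrow> Erel u w" unfolding Erel_def by auto

lemma tb_self: "u \<in> V \<Longrightarrow> u \<in> tb u" by (simp add: tb_def Erel_def)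
lemma tb_V: "tb u \<subseteq> V" by (auto simp: tb_def)
lemma tb_eq: "v \<in> tb u \<Longrightarrow> tb v = tb u"
proof -
  assume "v \<in> tb u"
  hence uv: "Erel u v" by (simp add: tb_def)
  have "Erel v w \<longleftrightarrow> Erel u w" for w
    using Erel_trans[OF uv, of w] Erel_trans[OF Erel_sym[OF uv], of w] by blast
  thus ?thesis unfolding tb_def by simp
qed
lemma tb_lev: "v \<in> tb u \<Longrightarrow> lev v = lev u" unfolding tb_def Erel_def by auto
lemma tb_col: "v \<in> tb u \<Longrightarrow> c v = c u" unfolding tb_def Erel_def by auto
lemma tb_ns: "v \<in> tb u \<Longrightarrow> v \<noteq> u \<Longrightarrow> \<exists>m i. u = Y m i \<and> full m \<and> i \<le> bnd n \<and> i \<notin> blk m"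
  unfolding tb_def Erel_def by auto

lemma tb_partner: "full (Suc m) \<Longrightarrow> i \<le> bnd n \<Longrightarrow> i \<notin> blk (Suc m) \<Longrightarrow>
    \<exists>j. j \<noteq> i \<and> j \<le> bnd n \<and> Y m j \<in> tb (Y m i)"
proof -
  assume f: "full (Suc m)" and i: "i \<le> bnd n" and nb: "i \<notin> blk (Suc m)"
  have fm: "full m" using f full_Suc by blast
  from nb i obtain j where j: "j \<le> bnd n" "j \<notin> blk m" "j \<noteq> i" "c (Y m j) = c (Y m i)" "i \<notin> blk m" by auto
  hence "Erel (Y m i) (Y m j)" unfolding Erel_def using fm i by auto
  moreover have "Y m j \<in> V" using fm j unfolding full_def by blast
  ultimately show ?thesis using j unfolding tb_def by blast
qed

lemma V_le: "a \<in> V \<Longrightarrow> b \<in> V \<Longrightarrow> leY n a b \<Longrightarrow> lev b \<le> lev a \<and> (lev b = lev a \<longrightarrow> b = a)"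
  using V_Y leY_lev by (metis lev.simps(2))

definition Inv :: "yelt fposet \<Rightarrow> (yelt set \<Rightarrow> yelt set) \<Rightarrow> bool" where
  "Inv W F \<longleftrightarrow> fst W = (\<lambda>u. F {u}) ` V \<and> (\<forall>u\<in>V. u \<in> F {u} \<and> F {u} \<subseteq> tb u)
    \<and> (\<forall>u\<in>V. \<forall>v\<in>F {u}. F {v} = F {u})
    \<and> (\<forall>P\<in>fst W. \<forall>Q\<in>fst W. snd W P Q \<longleftrightarrow> (\<exists>a\<in>P. \<exists>b\<in>Q. leY n a b))
    \<and> (\<forall>u\<in>V. F {u} \<noteq> {u} \<longrightarrow> (\<forall>w\<in>V. lev w < lev u \<longrightarrow> F {w} = tb w))"

lemma Inv_init: "Inv (initial n V) id"
  unfolding Inv_def initial_def using tb_self by simp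

lemma InvD1: "Inv W F \<Longrightarrow> fst W = (\<lambda>u. F {u}) ` V"
  unfolding Inv_def by (elim conjE) assumption
lemma InvD2a: "Inv W F \<Longrightarrow> \<forall>u\<in>V. u \<in> F {u} \<and> F {u} \<subseteq> tb u"
  unfolding Inv_def by (elim conjE) assumption
lemma InvD2: "Inv W F \<Longrightarrow> u \<in> V \<Longrightarrow> u \<in> F {u}" using InvD2a by blast
lemma InvD2': "Inv W F \<Longrightarrow> u \<in> V \<Longrightarrow> F {u} \<subseteq> tb u" using InvD2a by blast
lemma InvD3a: "Inv W F \<Longrightarrow> \<forall>u\<in>V. \<forall>v\<in>F {u}. F {v} = F {u}"
  unfolding Inv_def by (elim conjE) assumption
lemma InvD3: "Inv W F \<Longrightarrow> u \<in> V \<Longrightarrow> v \<in> F {u} \<Longrightarrow> F {v} = F {u}"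
  using InvD3a by blast
lemma InvD4a: "Inv W F \<Longrightarrow> \<forall>PP\<in>fst W. \<forall>QQ\<in>fst W. snd W PP QQ \<longleftrightarrow> (\<exists>a\<in>PP. \<exists>b\<in>QQ. leY n a b)"
  unfolding Inv_def by (elim conjE) assumption
lemma InvD4: "Inv W F \<Longrightarrow> PP \<in> fst W \<Longrightarrow> QQ \<in> fst W \<Longrightarrow> snd W PP QQ \<longleftrightarrow> (\<exists>a\<in>PP. \<exists>b\<in>QQ. leY n a b)"
  using InvD4a by blast
lemma InvD5a: "Inv W F \<Longrightarrow> \<forall>u\<in>V. F {u} \<noteq> {u} \<longrightarrow> (\<forall>w\<in>V. lev w < lev u \<longrightarrow> F {w} = tb w)"
  unfolding Inv_def by (elim conjE) assumption
lemma InvD5: "Inv W F \<Longrightarrow> u \<in> V \<Longrightarrow> F {u} \<noteq> {u} \<Longrightarrow> w \<in> V \<Longrightarrow> lev w < lev u \<Longrightarrow> F {w} = tb w"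
  using InvD5a by blast

lemma Inv_S: "Inv W F \<Longrightarrow> u \<in> V \<Longrightarrow> F {u} \<in> fst W" by (simp add: InvD1)

lemma Inv_mem: "Inv W F \<Longrightarrow> z \<in> V \<Longrightarrow> b \<in> F {z} \<Longrightarrow> b \<in> V \<and> F {b} = F {z} \<and> lev b = lev z"
proof -
  assume I: "Inv W F" and z: "z \<in> V" and b: "b \<in> F {z}"
  have "F {z} \<subseteq> tb z" using InvD2'[OF I z] .
  hence "b \<in> tb z" using b by blast
  hence "b \<in> V" "lev b = lev z" using tb_V tb_lev by auto
  moreover have "F {b} = F {z}" using InvD3[OF I z b] .
  ultimately show ?thesis by simp
qed

lemma Inv_blk: "Inv W F \<Longrightarrow> Z \<in> fst W \<Longrightarrow> \<exists>z\<in>V. Z = F {z}"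
  by (simp add: InvD1) blast

lemma imm_zero: assumes I: "Inv W F" and x0: "x0 \<in> V" "lev x0 = 0"
  shows "\<not> imm_succ W (F {x0}) Z"
proof
  assume h: "imm_succ W (F {x0}) Z"
  have XS: "F {x0} \<in> fst W" using Inv_S[OF I x0(1)] .
  have ZS: "Z \<in> fst W" and sn: "snd W (F {x0}) Z" and ne: "F {x0} \<noteq> Z" using h unfolding imm_succ_def by auto
  obtain a b where ab: "a \<in> F {x0}" "b \<in> Z" "leY n a b" using sn InvD4[OF I XS ZS] by blast
  obtain z where z: "z \<in> V" "Z = F {z}" using Inv_blk[OF I ZS] by blast
  have a: "a \<in> V" "F {a} = F {x0}" "lev a = 0" using Inv_mem[OF I x0(1) ab(1)] x0 by auto
  have b: "b \<in> V" "F {b} = Z" using Inv_mem[OF I z(1)] ab z by auto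
  have "b = a" using V_le[OF a(1) b(1) ab(3)] a by simp
  thus False using a b ne by simp
qed

lemma imm_char: assumes I: "Inv W F" and x0: "x0 \<in> V" "lev x0 = Suc m"
  shows "imm_succ W (F {x0}) Z \<longleftrightarrow> Z \<in> fst W \<and> (\<exists>z\<in>Z. lev z = m) \<and> (\<exists>a\<in>F {x0}. \<exists>b\<in>Z. leY n a b)"
proof
  have XS: "F {x0} \<in> fst W" using Inv_S[OF I x0(1)] .
  have xlev: "b \<in> F {x0} \<Longrightarrow> b \<in> V \<and> F {b} = F {x0} \<and> lev b = Suc m" for b
    using Inv_mem[OF I x0(1), of b] x0(2) by simp
  assume h: "imm_succ W (F {x0}) Z"
  have ZS: "Z \<in> fst W" and sn: "snd W (F {x0}) Z" and ne: "F {x0} \<noteq> Z" using h unfolding imm_succ_def by auto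
  obtain a b where ab: "a \<in> F {x0}" "b \<in> Z" "leY n a b" using sn InvD4[OF I XS ZS] by blast
  obtain z where z: "z \<in> V" "Z = F {z}" using Inv_blk[OF I ZS] by blast
  have a: "a \<in> V" "F {a} = F {x0}" "lev a = Suc m" using xlev[OF ab(1)] by auto
  have b: "b \<in> V" "F {b} = Z" using Inv_mem[OF I z(1), of b] ab(2) z(2) by auto
  have vl: "lev b \<le> lev a \<and> (lev b = lev a \<longrightarrow> b = a)" using V_le[OF a(1) b(1) ab(3)] .
  have lb: "lev b \<le> Suc m" using vl a(3) by simp
  have lb2: "lev b \<noteq> Suc m"
  proof
    assume "lev b = Suc m"
    hence "b = a" using vl a(3) by simp
    thus False using a(2) b(2) ne by simp
  qed
  have "lev b = m"
  proof (rule ccontr)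
    assume "lev b \<noteq> m"
    hence lt: "Suc (lev b) < Suc m" using lb lb2 by simp
    obtain ia where ia: "a = Y (Suc m) ia" using V_Y[OF a(1)] a(3) by auto
    obtain ib jb where ib: "b = Y ib jb" using V_Y[OF b(1)] by auto
    have lt': "Suc ib < Suc m" using lt ib by simp
    have "leY n (Y (Suc m) ia) (Y ib jb)" using ab(3) ia ib by simp
    from leY_mid[OF this lt'] obtain k where k: "leY n a (Y m k)" "leY n (Y m k) b"
      using ia ib by auto
    have wV: "Y m k \<in> V" using up a(1) k(1) by blast
    have WS: "F {Y m k} \<in> fst W" using Inv_S[OF I wV] .
    have wW: "Y m k \<in> F {Y m k}" using InvD2[OF I wV] .
    have s1: "snd W (F {x0}) (F {Y m k})" using InvD4[OF I XS WS] ab(1) wW k(1) by blast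
    have s2: "snd W (F {Y m k}) Z" using InvD4[OF I WS ZS] ab(2) wW k(2) by blast
    have n1: "F {Y m k} \<noteq> F {x0}"
    proof
      assume "F {Y m k} = F {x0}"
      hence "lev (Y m k) = Suc m" using xlev wW by metis
      thus False by simp
    qed
    have n2: "F {Y m k} \<noteq> Z"
    proof
      assume "F {Y m k} = Z"
      hence "b \<in> F {Y m k}" using ab(2) by simp
      hence "lev b = m" using Inv_mem[OF I wV, of b] by simp
      thus False using \<open>lev b \<noteq> m\<close> by simp
    qed
    show False using h WS s1 s2 n1 n2 unfolding imm_succ_def by blast
  qed
  thus "Z \<in> fst W \<and> (\<exists>z\<in>Z. lev z = m) \<and> (\<exists>a\<in>F {x0}. \<exists>b\<in>Z. leY n a b)" using ZS ab by blast
next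
  have XS: "F {x0} \<in> fst W" using Inv_S[OF I x0(1)] .
  have xlev: "b \<in> F {x0} \<Longrightarrow> b \<in> V \<and> F {b} = F {x0} \<and> lev b = Suc m" for b
    using Inv_mem[OF I x0(1), of b] x0(2) by simp
  assume h: "Z \<in> fst W \<and> (\<exists>z\<in>Z. lev z = m) \<and> (\<exists>a\<in>F {x0}. \<exists>b\<in>Z. leY n a b)"
  then obtain z where ZS: "Z \<in> fst W" and zZ: "z \<in> Z" "lev z = m" by blast
  obtain z' where z': "z' \<in> V" "Z = F {z'}" using Inv_blk[OF I ZS] by blast
  have lz': "lev z' = m" using Inv_mem[OF I z'(1), of z] z'(2) zZ by simp
  have zlev: "b \<in> Z \<Longrightarrow> b \<in> V \<and> F {b} = Z \<and> lev b = m" for b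
    using Inv_mem[OF I z'(1), of b] z'(2) lz' by simp
  have sn: "snd W (F {x0}) Z" using h InvD4[OF I XS ZS] by blast
  have ne: "F {x0} \<noteq> Z"
  proof
    assume "F {x0} = Z"
    hence "lev z = Suc m" using xlev zZ(1) by metis
    thus False using zZ(2) by simp
  qed
  have "\<not> (\<exists>w\<in>fst W. snd W (F {x0}) w \<and> snd W w Z \<and> w \<noteq> F {x0} \<and> w \<noteq> Z)"
  proof
    assume "\<exists>w\<in>fst W. snd W (F {x0}) w \<and> snd W w Z \<and> w \<noteq> F {x0} \<and> w \<noteq> Z"
    then obtain w where w: "w \<in> fst W" "snd W (F {x0}) w" "snd W w Z" "w \<noteq> F {x0}" "w \<noteq> Z" by blast
    obtain a1 w1 where aw: "a1 \<in> F {x0}" "w1 \<in> w" "leY n a1 w1" using w(2) InvD4[OF I XS w(1)] by blast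
    obtain w2 b2 where wb: "w2 \<in> w" "b2 \<in> Z" "leY n w2 b2" using w(3) InvD4[OF I w(1) ZS] by blast
    obtain w0 where w0: "w0 \<in> V" "w = F {w0}" using Inv_blk[OF I w(1)] by blast
    have w1: "w1 \<in> V" "F {w1} = w" "lev w1 = lev w0" using Inv_mem[OF I w0(1), of w1] w0(2) aw(2) by auto
    have w2: "w2 \<in> V" "F {w2} = w" "lev w2 = lev w0" using Inv_mem[OF I w0(1), of w2] w0(2) wb(1) by auto
    have a1: "a1 \<in> V" "F {a1} = F {x0}" "lev a1 = Suc m" using xlev[OF aw(1)] by auto
    have b2: "b2 \<in> V" "F {b2} = Z" "lev b2 = m" using zlev[OF wb(2)] by auto
    have 1: "lev w1 \<le> lev a1 \<and> (lev w1 = lev a1 \<longrightarrow> w1 = a1)" using V_le[OF a1(1) w1(1) aw(3)] .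
    have 2: "lev b2 \<le> lev w2 \<and> (lev b2 = lev w2 \<longrightarrow> b2 = w2)" using V_le[OF w2(1) b2(1) wb(3)] .
    have "lev w1 \<noteq> Suc m"
    proof
      assume "lev w1 = Suc m"
      hence "w1 = a1" using 1 a1(3) by simp
      thus False using w1(2) a1(2) w(4) by simp
    qed
    moreover have "lev w2 \<noteq> m"
    proof
      assume "lev w2 = m"
      hence "b2 = w2" using 2 b2(3) by simp
      thus False using w2(2) b2(2) w(5) by simp
    qed
    ultimately show False using 1 2 w1(3) w2(3) a1(3) b2(3) by simp
  qed
  thus "imm_succ W (F {x0}) Z" unfolding imm_succ_def using ZS sn ne by blast
qed

end

context setting
begin

lemma merge:
  assumes I: "Inv W F" and u: "u \<in> V" and v: "v \<in> tb u" and ne: "F {u} \<noteq> F {v}"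
    and imm: "\<forall>Z. imm_succ W (F {u}) Z \<longleftrightarrow> imm_succ W (F {v}) Z"
    and min: "\<forall>w\<in>V. lev w < lev u \<longrightarrow> F {w} = tb w"
  shows "\<exists>W' f. beta_step W W' f \<and> Inv W' (f \<circ> F) \<and> card (fst W') < card (fst W)"
proof -
  have vV: "v \<in> V" using v tb_V by blast
  define X1 where "X1 = F {u}"
  define X2 where "X2 = F {v}"
  define f where "f = (\<lambda>B. if B = X1 \<or> B = X2 then X1 \<union> X2 else B)"
  define W' where "W' = (f ` fst W, \<lambda>PP QQ. \<exists>u\<in>fst W. \<exists>v\<in>fst W. f u = PP \<and> f v = QQ \<and> snd W u v)"
  have XS1: "X1 \<in> fst W" using Inv_S[OF I u] X1_def by simp
  have XS2: "X2 \<in> fst W" using Inv_S[OF I vV] X2_def by simp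
  have tbvu: "tb v = tb u" using tb_eq[OF v] .
  have X1tb: "X1 \<subseteq> tb u" using InvD2'[OF I u] X1_def by simp
  have X2tb: "X2 \<subseteq> tb u" using InvD2'[OF I vV] X2_def tbvu by simp
  have uX1: "u \<in> X1" using InvD2[OF I u] X1_def by simp
  have vX2: "v \<in> X2" using InvD2[OF I vV] X2_def by simp
  have inX1: "w \<in> X1 \<Longrightarrow> F {w} = X1" for w using InvD3[OF I u] X1_def by simp
  have inX2: "w \<in> X2 \<Longrightarrow> F {w} = X2" for w using InvD3[OF I vV] X2_def by simp
  have ne12: "X1 \<noteq> X2" using ne X1_def X2_def by simp
  have step: "beta_step W W' f"
    unfolding beta_step_def
  proof (rule bexI[OF _ XS1], rule bexI[OF _ XS2], intro conjI)
    show "X1 \<noteq> X2" by (rule ne12)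
    show "\<forall>z. imm_succ W X1 z \<longleftrightarrow> imm_succ W X2 z" using imm unfolding X1_def X2_def .
    show "f = (\<lambda>B. if B = X1 \<or> B = X2 then X1 \<union> X2 else B)" by (rule f_def)
    show "fst W' = f ` fst W" unfolding W'_def by (rule fst_conv)
    show "snd W' = (\<lambda>PP QQ. \<exists>u\<in>fst W. \<exists>v\<in>fst W. f u = PP \<and> f v = QQ \<and> snd W u v)"
      unfolding W'_def by (rule snd_conv)
  qed
  have fsup: "B \<subseteq> f B" for B unfolding f_def by auto
  have memf: "PP \<in> f ` fst W \<Longrightarrow> a \<in> PP \<longleftrightarrow> (\<exists>B\<in>fst W. f B = PP \<and> a \<in> B)" for PP a
  proof
    assume PP: "PP \<in> f ` fst W" and a: "a \<in> PP"
    then obtain B0 where B0: "B0 \<in> fst W" "PP = f B0" by blast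
    show "\<exists>B\<in>fst W. f B = PP \<and> a \<in> B"
    proof (cases "B0 = X1 \<or> B0 = X2")
      case True
      hence "PP = X1 \<union> X2" using B0 f_def by simp
      hence "a \<in> X1 \<or> a \<in> X2" using a by simp
      moreover have "f X1 = PP" "f X2 = PP" using \<open>PP = X1 \<union> X2\<close> f_def by auto
      ultimately show ?thesis using XS1 XS2 by blast
    next
      case False
      hence "PP = B0" using B0 f_def by simp
      then show ?thesis using B0 a by auto
    qed
  next
    assume "\<exists>B\<in>fst W. f B = PP \<and> a \<in> B"
    thus "a \<in> PP" using fsup by blast
  qed
  have tbfix: "w \<in> V \<Longrightarrow> F {w} = tb w \<Longrightarrow> f (F {w}) = F {w}" for w
  proof -
    assume w: "w \<in> V" and e: "F {w} = tb w"
    have wF: "w \<in> F {w}" using InvD2[OF I w] .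
    have "F {w} \<noteq> X1"
    proof
      assume h: "F {w} = X1"
      hence "tb w = tb u" using tb_eq X1tb wF by blast
      hence "v \<in> X1" using h e v by simp
      thus False using inX1 X2_def ne12 by simp
    qed
    moreover have "F {w} \<noteq> X2"
    proof
      assume h: "F {w} = X2"
      hence "tb w = tb u" using tb_eq X2tb wF by blast
      hence "u \<in> X2" using h e tb_self[OF u] by simp
      thus False using inX2 X1_def ne12 by simp
    qed
    ultimately show ?thesis unfolding f_def by simp
  qed
  have inv: "Inv W' (f \<circ> F)"
    unfolding Inv_def
  proof (intro conjI ballI impI)
    show "fst W' = (\<lambda>u. (f \<circ> F) {u}) ` V" using InvD1[OF I] by (simp add: W'_def image_image)
  next
    fix w assume w: "w \<in> V"
    show "w \<in> (f \<circ> F) {w}" using InvD2[OF I w] fsup by auto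
  next
    fix w assume w: "w \<in> V"
    show "(f \<circ> F) {w} \<subseteq> tb w"
    proof (cases "F {w} = X1 \<or> F {w} = X2")
      case True
      hence "w \<in> X1 \<or> w \<in> X2" using InvD2[OF I w] by auto
      hence "tb w = tb u" using tb_eq X1tb X2tb by blast
      then show ?thesis using True X1tb X2tb f_def by auto
    next
      case False
      then show ?thesis using InvD2'[OF I w] f_def by simp
    qed
  next
    fix w w' assume w: "w \<in> V" and w': "w' \<in> (f \<circ> F) {w}"
    show "(f \<circ> F) {w'} = (f \<circ> F) {w}"
    proof (cases "F {w} = X1 \<or> F {w} = X2")
      case True
      hence "w' \<in> X1 \<or> w' \<in> X2" using w' f_def by auto
      hence "F {w'} = X1 \<or> F {w'} = X2" using inX1 inX2 by blast
      then show ?thesis using True f_def by auto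
    next
      case False
      hence "w' \<in> F {w}" using w' f_def by simp
      hence "F {w'} = F {w}" using InvD3[OF I w] by simp
      then show ?thesis by simp
    qed
  next
    fix PP QQ assume PP: "PP \<in> fst W'" and QQ: "QQ \<in> fst W'"
    have PP': "PP \<in> f ` fst W" and QQ': "QQ \<in> f ` fst W" using PP QQ by (auto simp: W'_def)
    have s1: "snd W' PP QQ \<longleftrightarrow> (\<exists>B1\<in>fst W. \<exists>B2\<in>fst W. f B1 = PP \<and> f B2 = QQ \<and> snd W B1 B2)"
      unfolding W'_def by simp
    show "snd W' PP QQ \<longleftrightarrow> (\<exists>a\<in>PP. \<exists>b\<in>QQ. leY n a b)"
    proof
      assume "snd W' PP QQ"
      then obtain B1 B2 where B: "B1 \<in> fst W" "B2 \<in> fst W" "f B1 = PP" "f B2 = QQ" "snd W B1 B2"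
        using s1 by blast
      then obtain a b where ab: "a \<in> B1" "b \<in> B2" "leY n a b" using InvD4[OF I B(1) B(2)] by blast
      have "a \<in> PP" using memf[OF PP'] B ab by blast
      moreover have "b \<in> QQ" using memf[OF QQ'] B ab by blast
      ultimately show "\<exists>a\<in>PP. \<exists>b\<in>QQ. leY n a b" using ab(3) by blast
    next
      assume "\<exists>a\<in>PP. \<exists>b\<in>QQ. leY n a b"
      then obtain a b where ab: "a \<in> PP" "b \<in> QQ" "leY n a b" by blast
      obtain B1 where B1: "B1 \<in> fst W" "f B1 = PP" "a \<in> B1" using memf[OF PP'] ab(1) by blast
      obtain B2 where B2: "B2 \<in> fst W" "f B2 = QQ" "b \<in> B2" using memf[OF QQ'] ab(2) by blast
      have "snd W B1 B2" using InvD4[OF I B1(1) B2(1)] B1 B2 ab(3) by blast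
      thus "snd W' PP QQ" using s1 B1 B2 by blast
    qed
  next
    fix w w' assume w: "w \<in> V" and nsg: "(f \<circ> F) {w} \<noteq> {w}" and w': "w' \<in> V" and lt: "lev w' < lev w"
    show "(f \<circ> F) {w'} = tb w'"
    proof (cases "F {w} = X1 \<or> F {w} = X2")
      case True
      hence "w \<in> X1 \<or> w \<in> X2" using InvD2[OF I w] by auto
      hence "lev w = lev u" using X1tb X2tb tb_lev by blast
      hence "F {w'} = tb w'" using min w' lt by simp
      then show ?thesis using tbfix[OF w'] by simp
    next
      case False
      hence "F {w} \<noteq> {w}" using nsg f_def by simp
      hence "F {w'} = tb w'" using InvD5[OF I w _ w' lt] by simp
      then show ?thesis using tbfix[OF w'] by simp
    qed
  qed
  have finS: "finite (fst W)" using InvD1[OF I] finV by simp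
  have "card (f ` fst W) \<noteq> card (fst W)"
  proof
    assume "card (f ` fst W) = card (fst W)"
    hence "inj_on f (fst W)" using eq_card_imp_inj_on finS by blast
    moreover have "f X1 = f X2" unfolding f_def by simp
    ultimately show False using XS1 XS2 ne12 unfolding inj_on_def by blast
  qed
  hence "card (fst W') < card (fst W)" using card_image_le[OF finS, of f] by (simp add: W'_def)
  thus ?thesis using step inv by blast
qed

lemma sees_all:
  assumes I: "Inv W F" and x0: "Y (Suc m) i0 \<in> V" and f: "full (Suc m)" and i0: "i0 \<le> bnd n"
    and nb: "i0 \<notin> blk (Suc m)" and min: "\<forall>w\<in>V. lev w < Suc m \<longrightarrow> F {w} = tb w"
  shows "imm_succ W (F {Y (Suc m) i0}) Z \<longleftrightarrow> Z \<in> fst W \<and> (\<exists>z\<in>Z. lev z = m)"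
proof -
  have "Z \<in> fst W \<and> (\<exists>z\<in>Z. lev z = m) \<Longrightarrow> (\<exists>a\<in>F {Y (Suc m) i0}. \<exists>b\<in>Z. leY n a b)"
  proof -
    assume h: "Z \<in> fst W \<and> (\<exists>z\<in>Z. lev z = m)"
    then obtain z where ZS: "Z \<in> fst W" and z: "z \<in> Z" "lev z = m" by blast
    obtain z' where z': "z' \<in> V" "Z = F {z'}" using Inv_blk[OF I ZS] by blast
    have zV: "z \<in> V" and Fz: "F {z} = Z" using Inv_mem[OF I z'(1), of z] z z' by auto
    obtain k where k: "z = Y m k" "k \<le> bnd n" using V_Y[OF zV] z(2) by auto
    have Fz': "F {z} = tb z" using min zV z(2) by simp
    have aX: "Y (Suc m) i0 \<in> F {Y (Suc m) i0}" using InvD2[OF I x0] .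
    show ?thesis
    proof (cases "k = i0")
      case False
      hence "leY n (Y (Suc m) i0) z" using k i0 by (simp add: leY_adj)
      then show ?thesis using aX z(1) by blast
    next
      case True
      obtain j where j: "j \<noteq> i0" "j \<le> bnd n" "Y m j \<in> tb (Y m i0)" using tb_partner[OF f i0 nb] by blast
      have "Y m j \<in> Z" using j Fz Fz' k True by simp
      moreover have "leY n (Y (Suc m) i0) (Y m j)" using j i0 by (simp add: leY_adj)
      ultimately show ?thesis using aX by blast
    qed
  qed
  thus ?thesis using imm_char[OF I x0, of m Z] by auto
qed

lemma reach_target:
  "reach W0 Vs fs \<Longrightarrow> Inv (last Vs) (compose_all fs) \<Longrightarrow>
    \<exists>Vs' fs'. reach W0 Vs' fs' \<and> (\<forall>u\<in>V. compose_all fs' {u} = tb u)"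
proof (induction "card (fst (last Vs))" arbitrary: Vs fs rule: less_induct)
  case less
  define F where "F = compose_all fs"
  have I: "Inv (last Vs) F" using less.prems(2) F_def by simp
  show ?case
  proof (cases "\<forall>u\<in>V. F {u} = tb u")
    case True thus ?thesis using less.prems(1) F_def by blast
  next
    case False
    then obtain u0 where u0: "u0 \<in> V \<and> F {u0} \<noteq> tb u0" by blast
    from ex_has_least_nat[of "\<lambda>u. u \<in> V \<and> F {u} \<noteq> tb u" u0 lev, OF u0]
    obtain u where u: "u \<in> V" "F {u} \<noteq> tb u" and umin: "\<forall>w. w \<in> V \<and> F {w} \<noteq> tb w \<longrightarrow> lev u \<le> lev w"
      by blast
    have min: "\<forall>w\<in>V. lev w < lev u \<longrightarrow> F {w} = tb w" using umin by force
    have "F {u} \<subseteq> tb u" using InvD2'[OF I u(1)] .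
    then obtain v where v: "v \<in> tb u" "v \<notin> F {u}" using u(2) by blast
    have vV: "v \<in> V" using v tb_V by blast
    have ne: "F {u} \<noteq> F {v}" using InvD2[OF I vV] v(2) by auto
    have uv: "v \<noteq> u" using InvD2[OF I u(1)] v(2) by auto
    obtain m i where mi: "u = Y m i" "full m" "i \<le> bnd n" "i \<notin> blk m" using tb_ns[OF v(1) uv] by blast
    have "u \<in> tb v" using tb_eq[OF v(1)] tb_self[OF u(1)] by simp
    then obtain m' j where mj: "v = Y m' j" "full m'" "j \<le> bnd n" "j \<notin> blk m'" using tb_ns[of u v] uv by blast
    have "m' = m" using tb_lev[OF v(1)] mi mj by simp
    have imm: "\<forall>Z. imm_succ (last Vs) (F {u}) Z \<longleftrightarrow> imm_succ (last Vs) (F {v}) Z"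
    proof (cases m)
      case 0
      then show ?thesis using imm_zero[OF I u(1)] imm_zero[OF I vV] mi mj \<open>m' = m\<close> by simp
    next
      case (Suc m1)
      have min': "\<forall>w\<in>V. lev w < Suc m1 \<longrightarrow> F {w} = tb w" using min mi Suc by simp
      have fS: "full (Suc m1)" using mi(2) Suc by simp
      have uY: "Y (Suc m1) i \<in> V" "i \<notin> blk (Suc m1)" using u(1) mi Suc by auto
      have vY: "Y (Suc m1) j \<in> V" "j \<notin> blk (Suc m1)" using vV mj Suc \<open>m' = m\<close> by auto
      have e1: "imm_succ (last Vs) (F {u}) Z \<longleftrightarrow> Z \<in> fst (last Vs) \<and> (\<exists>z\<in>Z. lev z = m1)" for Z
        using sees_all[OF I uY(1) fS mi(3) uY(2) min'] mi(1) Suc by simp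
      have e2: "imm_succ (last Vs) (F {v}) Z \<longleftrightarrow> Z \<in> fst (last Vs) \<and> (\<exists>z\<in>Z. lev z = m1)" for Z
        using sees_all[OF I vY(1) fS mj(3) vY(2) min'] mj(1) Suc \<open>m' = m\<close> by simp
      show ?thesis using e1 e2 by simp
    qed
    from merge[OF I u(1) v(1) ne imm min] obtain W' f where
      W': "beta_step (last Vs) W' f" "Inv W' (f \<circ> F)" "card (fst W') < card (fst (last Vs))" by blast
    have R: "reach W0 (Vs @ [W']) (fs @ [f])" using rs[OF less.prems(1) W'(1)] .
    have "Inv (last (Vs @ [W'])) (compose_all (fs @ [f]))" using W'(2) by (simp add: compose_snoc F_def)
    moreover have "card (fst (last (Vs @ [W']))) < card (fst (last Vs))" using W'(3) by simp
    ultimately show ?thesis using less.hyps R by blast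
  qed
qed

end

theorem mainTheorem8:
  fixes n :: nat and V :: "yelt set" and c :: "yelt \<Rightarrow> bool list"
  assumes "E_subspace n V" and "finite V" and "weak_coloring n V c"
  shows "\<exists>(k::nat) (Vs :: yelt fposet list) (fs :: (yelt set \<Rightarrow> yelt set) list).
     length Vs = k + 1 \<and> length fs = k \<and> Vs ! 0 = initial n V \<and>
     (\<forall>i<k. beta_step (Vs ! i) (Vs ! (i + 1)) (fs ! i)) \<and>
     (\<forall>u\<in>V. \<forall>v\<in>V. compose_all fs {u} = compose_all fs {v} \<longrightarrow> c u = c v) \<and>
     (\<forall>m. (\<forall>i\<le>bnd n. Y m i \<in> V) \<longrightarrow>
        (\<exists>i j. i < j \<and> j \<le> bnd n \<and> compose_all fs {Y m i} = compose_all fs {Y m j}))"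
proof -
  interpret setting n V c by (rule setting.intro) (rule assms)+
  have r: "reach (initial n V) [initial n V] []" by (rule r0)
  have "Inv (last [initial n V]) (compose_all [])" using Inv_init by (simp add: compose_all_def)
  from reach_target[OF r this] obtain Vs fs where R: "reach (initial n V) Vs fs"
    and T: "\<forall>u\<in>V. compose_all fs {u} = tb u" by blast
  have P: "length Vs = length fs + 1" "Vs ! 0 = initial n V"
    "\<forall>i<length fs. beta_step (Vs ! i) (Vs ! (i + 1)) (fs ! i)" using reach_props[OF R] by auto
  have ii: "\<forall>u\<in>V. \<forall>v\<in>V. compose_all fs {u} = compose_all fs {v} \<longrightarrow> c u = c v"
  proof (intro ballI impI)
    fix u v assume u: "u \<in> V" and v: "v \<in> V" and e: "compose_all fs {u} = compose_all fs {v}"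
    hence "tb u = tb v" using T by simp
    hence "v \<in> tb u" using tb_self[OF v] by simp
    thus "c u = c v" using tb_col by simp
  qed
  have iii: "\<forall>m. (\<forall>i\<le>bnd n. Y m i \<in> V) \<longrightarrow>
        (\<exists>i j. i < j \<and> j \<le> bnd n \<and> compose_all fs {Y m i} = compose_all fs {Y m j})"
  proof (intro allI impI)
    fix m assume fm: "\<forall>i\<le>bnd n. Y m i \<in> V"
    hence f: "full m" unfolding full_def .
    obtain i j where ij: "i \<le> bnd n" "j \<le> bnd n" "i \<noteq> j" "i \<notin> blk m" "j \<notin> blk m" "c (Y m i) = c (Y m j)"
      using nonsing[OF f] by blast
    have "Erel (Y m i) (Y m j)" unfolding Erel_def using ij f by blast
    hence "Y m j \<in> tb (Y m i)" using fm ij(2) unfolding tb_def by simp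
    hence "tb (Y m j) = tb (Y m i)" by (rule tb_eq)
    hence eq: "compose_all fs {Y m i} = compose_all fs {Y m j}" using T fm ij by simp
    show "\<exists>i j. i < j \<and> j \<le> bnd n \<and> compose_all fs {Y m i} = compose_all fs {Y m j}"
    proof (cases "i < j")
      case True then show ?thesis using eq ij(2) by blast
    next
      case False
      hence "j < i" using ij(3) by simp
      then show ?thesis using eq[symmetric] ij(1) by blast
    qed
  qed
  have "length Vs = length fs + 1 \<and> length fs = length fs \<and> Vs ! 0 = initial n V \<and>
     (\<forall>i<length fs. beta_step (Vs ! i) (Vs ! (i + 1)) (fs ! i)) \<and>
     (\<forall>u\<in>V. \<forall>v\<in>V. compose_all fs {u} = compose_all fs {v} \<longrightarrow> c u = c v) \<and>
     (\<forall>m. (\<forall>i\<le>bnd n. Y m i \<in> V) \<longrightarrow>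
        (\<exists>i j. i < j \<and> j \<le> bnd n \<and> compose_all fs {Y m i} = compose_all fs {Y m j}))"
    by (intro conjI P(1) P(2) P(3) ii iii refl)
  thus ?thesis by (intro exI)
qed

end
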